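(* Let $Q$ be a finite group and fix integers $g,r\ge 1$. Let $p(Q,g,r,n)$ be the probability that the group $G=\langle a_1,\dots,a_g\mid R_1,\dots,R_r\rangle$ of a random $g$-generator, $r$-relator presentation of complexity $n$ admits an epimorphism onto $Q$. Then $p(Q,g,r,n)$ converges as $n\to\infty$. Moreover, for each $k\ge 0$ the probability that $G$ has exactly $k$ epimorphisms onto $Q$, counted modulo $\mathrm{Aut}(Q)$, also converges as $n\to\infty$.
   Context: A random relator of length (complexity) $n$ in the free group $F_g$ on $a_1,\dots,a_g$ is a word $x_1x_2\cdots x_n$ where each letter $x_j$ is one of $a_i^{\pm1}$ ($1\le i\le g$) or the identity, all $(2g+1)^n$ such words being equally likely. A random presentation of complexity $n$ uses $r$ independent random relators $R_1,\dots,R_r$ of length $n$. Two epimorphisms to $Q$ are identified if they differ by an automorphism of $Q$ (equivalently, one counts normal subgroups with quotient $Q$). *)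

theory Defs
  imports "HOL-Algebra.Algebra" "HOL-Analysis.Analysis"
begin

text \<open>Letters of a word in the free group on a_0,...,a_{g-1} (0-indexed):
  None = identity letter, Some (i, True) = a_i, Some (i, False) = a_i^{-1}.\<close>
type_synonym letter = "(nat \<times> bool) option"

definition letters :: "nat \<Rightarrow> letter set" where
  "letters g = {None} \<union> {Some (i, b) | i b. i < g}"

definition words :: "nat \<Rightarrow> nat \<Rightarrow> letter list set" where
  "words g n = {w. length w = n \<and> set w \<subseteq> letters g}"

definition presentations :: "nat \<Rightarrow> nat \<Rightarrow> nat \<Rightarrow> letter list list set" where
  "presentations g r n = {Rs. length Rs = r \<and> set Rs \<subseteq> words g n}"

definition eval_letter :: "('a, 'b) monoid_scheme \<Rightarrow> (nat \<Rightarrow> 'a) \<Rightarrow> letter \<Rightarrow> 'a" where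
  "eval_letter Q q x = (case x of None \<Rightarrow> \<one>\<^bsub>Q\<^esub>
     | Some (i, True) \<Rightarrow> q i | Some (i, False) \<Rightarrow> inv\<^bsub>Q\<^esub> (q i))"

definition eval_word :: "('a, 'b) monoid_scheme \<Rightarrow> (nat \<Rightarrow> 'a) \<Rightarrow> letter list \<Rightarrow> 'a" where
  "eval_word Q q w = foldr (\<lambda>x acc. eval_letter Q q x \<otimes>\<^bsub>Q\<^esub> acc) w \<one>\<^bsub>Q\<^esub>"

text \<open>Homomorphisms <a_1..a_g | Rs> \<rightarrow> Q, identified (universal property of the
  presentation) with their images of the generators, satisfying all relators.\<close>
definition pres_homs :: "('a, 'b) monoid_scheme \<Rightarrow> nat \<Rightarrow> letter list list \<Rightarrow> (nat \<Rightarrow> 'a) set" where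
  "pres_homs Q g Rs = {q \<in> {..<g} \<rightarrow>\<^sub>E carrier Q. \<forall>R \<in> set Rs. eval_word Q q R = \<one>\<^bsub>Q\<^esub>}"

definition pres_epis :: "('a, 'b) monoid_scheme \<Rightarrow> nat \<Rightarrow> letter list list \<Rightarrow> (nat \<Rightarrow> 'a) set" where
  "pres_epis Q g Rs = {q \<in> pres_homs Q g Rs. generate Q (q ` {..<g}) = carrier Q}"

definition aut_equiv :: "('a, 'b) monoid_scheme \<Rightarrow> nat \<Rightarrow> ((nat \<Rightarrow> 'a) \<times> (nat \<Rightarrow> 'a)) set" where
  "aut_equiv Q g = {(q, q'). \<exists>\<phi> \<in> iso Q Q. q' = (\<lambda>i \<in> {..<g}. \<phi> (q i))}"

definition num_epis_mod_aut :: "('a, 'b) monoid_scheme \<Rightarrow> nat \<Rightarrow> letter list list \<Rightarrow> nat" where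
  "num_epis_mod_aut Q g Rs = card (pres_epis Q g Rs // aut_equiv Q g)"

definition prob_epi :: "('a, 'b) monoid_scheme \<Rightarrow> nat \<Rightarrow> nat \<Rightarrow> nat \<Rightarrow> real" where
  "prob_epi Q g r n = real (card {Rs \<in> presentations g r n. pres_epis Q g Rs \<noteq> {}})
                       / real (card (presentations g r n))"

definition prob_num_epis :: "('a, 'b) monoid_scheme \<Rightarrow> nat \<Rightarrow> nat \<Rightarrow> nat \<Rightarrow> nat \<Rightarrow> real" where
  "prob_num_epis Q g r n k = real (card {Rs \<in> presentations g r n. num_epis_mod_aut Q g Rs = k})
                       / real (card (presentations g r n))"

end

theory Submission
  imports Defs
begin

locale rw = group G for G :: "('a,'b) monoid_scheme" +
  fixes g :: nat
  assumes fin: "finite (carrier G)"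
begin

definition "Xs = {..<g} \<rightarrow>\<^sub>E carrier G"
definition "Hs = Xs \<rightarrow>\<^sub>E carrier G"
definition "phi w = (\<lambda>q\<in>Xs. eval_word G q w)"
definition "mul a b = (\<lambda>q\<in>Xs. a q \<otimes>\<^bsub>G\<^esub> b q)"
definition "LW = {w. set w \<subseteq> letters g}"
definition "KK = phi ` LW"
definition "BB = card (letters g)"
definition "EE n F = (\<Sum>w\<in>words g n. F (phi w)) / real BB ^ n"

lemma finite_letters: "finite (letters g)"
proof -
  have "letters g \<subseteq> insert None (Some ` ({..<g} \<times> UNIV))"
    unfolding letters_def by auto
  moreover have "finite (insert None (Some ` ({..<g} \<times> (UNIV::bool set))))" by simp
  ultimately show ?thesis by (rule finite_subset)
qed

lemma None_letters: "None \<in> letters g" unfolding letters_def by auto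

lemma BB_pos: "BB > 0"
  unfolding BB_def using finite_letters None_letters card_gt_0_iff by blast

lemma words_eq: "words g n = {xs. set xs \<subseteq> letters g \<and> length xs = n}"
  unfolding words_def by auto

lemma finite_words: "finite (words g n)"
  unfolding words_eq using finite_lists_length_eq[OF finite_letters] .

lemma card_words: "card (words g n) = BB ^ n"
  unfolding words_eq BB_def using card_lists_length_eq[OF finite_letters] .

lemma finite_Xs: "finite Xs"
  unfolding Xs_def by (intro finite_PiE fin) auto

lemma finite_Hs: "finite Hs"
  unfolding Hs_def by (intro finite_PiE fin finite_Xs)

lemma eval_letter_carrier:
  assumes "q \<in> Xs" "x \<in> letters g"
  shows "eval_letter G q x \<in> carrier G"
proof -
  have qi: "\<And>i. i < g \<Longrightarrow> q i \<in> carrier G" using assms(1) unfolding Xs_def by auto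
  show ?thesis using assms(2) unfolding letters_def eval_letter_def
    by (auto simp: qi split: option.splits bool.splits)
qed

lemma eval_word_carrier:
  assumes "q \<in> Xs" "set w \<subseteq> letters g"
  shows "eval_word G q w \<in> carrier G"
  using assms(2)
  by (induction w) (auto simp: eval_word_def intro!: eval_letter_carrier[OF assms(1)])

lemma foldr_eval:
  assumes "q \<in> Xs" "set u \<subseteq> letters g" "x \<in> carrier G"
  shows "foldr (\<lambda>y acc. eval_letter G q y \<otimes>\<^bsub>G\<^esub> acc) u x = eval_word G q u \<otimes>\<^bsub>G\<^esub> x"
  using assms(2)
proof (induction u)
  case Nil
  then show ?case using assms(3) by (simp add: eval_word_def)
next
  case (Cons a u)
  have a: "eval_letter G q a \<in> carrier G" using Cons.prems assms(1) eval_letter_carrier by auto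
  have u: "eval_word G q u \<in> carrier G" using Cons.prems assms(1) eval_word_carrier by auto
  have "foldr (\<lambda>y acc. eval_letter G q y \<otimes>\<^bsub>G\<^esub> acc) (a # u) x = eval_letter G q a \<otimes>\<^bsub>G\<^esub> (eval_word G q u \<otimes>\<^bsub>G\<^esub> x)"
    using Cons by simp
  also have "\<dots> = (eval_letter G q a \<otimes>\<^bsub>G\<^esub> eval_word G q u) \<otimes>\<^bsub>G\<^esub> x"
    using a u assms(3) m_assoc by simp
  also have "eval_letter G q a \<otimes>\<^bsub>G\<^esub> eval_word G q u = eval_word G q (a # u)"
    by (simp add: eval_word_def)
  finally show ?case .
qed

lemma eval_word_append:
  assumes "q \<in> Xs" "set u \<subseteq> letters g" "set v \<subseteq> letters g"
  shows "eval_word G q (u @ v) = eval_word G q u \<otimes>\<^bsub>G\<^esub> eval_word G q v"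
proof -
  have "eval_word G q (u @ v) = foldr (\<lambda>y acc. eval_letter G q y \<otimes>\<^bsub>G\<^esub> acc) u (eval_word G q v)"
    by (simp add: eval_word_def)
  also have "\<dots> = eval_word G q u \<otimes>\<^bsub>G\<^esub> eval_word G q v"
    using foldr_eval assms eval_word_carrier by blast
  finally show ?thesis .
qed

lemma eval_word_None: "eval_word G q (replicate k None) = \<one>\<^bsub>G\<^esub>"
  by (induction k) (auto simp: eval_word_def eval_letter_def)

lemma phi_Hs: "set w \<subseteq> letters g \<Longrightarrow> phi w \<in> Hs"
  unfolding phi_def Hs_def using eval_word_carrier by auto

lemma phi_append: "set u \<subseteq> letters g \<Longrightarrow> set v \<subseteq> letters g \<Longrightarrow> phi (u @ v) = mul (phi u) (phi v)"
  unfolding phi_def mul_def using eval_word_append by (auto intro!: ext)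

lemma phi_pad: "set w \<subseteq> letters g \<Longrightarrow> phi (w @ replicate k None) = phi w"
proof -
  assume w: "set w \<subseteq> letters g"
  have r: "set (replicate k None) \<subseteq> letters g" using None_letters by auto
  show ?thesis unfolding phi_def
    by (rule ext) (simp add: eval_word_append[OF _ w r] eval_word_None eval_word_carrier[OF _ w])
qed

lemma mul_Hs: "a \<in> Hs \<Longrightarrow> b \<in> Hs \<Longrightarrow> mul a b \<in> Hs"
  unfolding mul_def Hs_def by auto

lemma mul_assoc: "a \<in> Hs \<Longrightarrow> b \<in> Hs \<Longrightarrow> c \<in> Hs \<Longrightarrow> mul a (mul b c) = mul (mul a b) c"
proof (rule ext)
  fix q assume a: "a \<in> Hs" and b: "b \<in> Hs" and c: "c \<in> Hs"
  show "mul a (mul b c) q = mul (mul a b) c q"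
  proof (cases "q \<in> Xs")
    case True
    then have "a q \<in> carrier G" "b q \<in> carrier G" "c q \<in> carrier G" using a b c unfolding Hs_def by auto
    then show ?thesis using True unfolding mul_def by (simp add: m_assoc)
  qed (simp add: mul_def)
qed

lemma mul_one: "b \<in> Hs \<Longrightarrow> mul (phi []) b = b"
proof (rule ext)
  fix q assume b: "b \<in> Hs"
  show "mul (phi []) b q = b q"
  proof (cases "q \<in> Xs")
    case True
    then have "b q \<in> carrier G" using b unfolding Hs_def by auto
    then show ?thesis using True unfolding mul_def phi_def by (simp add: eval_word_def)
  next
    case False
    have e1: "b q = undefined" using b False unfolding Hs_def by (rule PiE_arb)
    have e2: "mul (phi []) b q = undefined" unfolding mul_def restrict_def by (rule if_not_P[OF False])
    show ?thesis using e2 e1 by (rule trans[OF _ sym])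
  qed
qed

lemma mul_inj: "a \<in> Hs \<Longrightarrow> inj_on (mul a) Hs"
proof (rule inj_onI)
  fix b c assume a: "a \<in> Hs" and b: "b \<in> Hs" and c: "c \<in> Hs" and e: "mul a b = mul a c"
  show "b = c"
  proof (rule ext)
    fix q show "b q = c q"
    proof (cases "q \<in> Xs")
      case True
      have m1: "mul a b q = a q \<otimes>\<^bsub>G\<^esub> b q" unfolding mul_def using True by (rule restrict_apply')
      have m2: "mul a c q = a q \<otimes>\<^bsub>G\<^esub> c q" unfolding mul_def using True by (rule restrict_apply')
      have eq: "a q \<otimes>\<^bsub>G\<^esub> b q = a q \<otimes>\<^bsub>G\<^esub> c q" using e m1 m2 by metis
      have ca: "a q \<in> carrier G" using a True unfolding Hs_def by (rule PiE_mem)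
      have cb: "b q \<in> carrier G" using b True unfolding Hs_def by (rule PiE_mem)
      have cc: "c q \<in> carrier G" using c True unfolding Hs_def by (rule PiE_mem)
      show ?thesis by (rule l_cancel[OF eq cb cc ca])
    next
      case False
      have "b q = undefined" using b False unfolding Hs_def by (rule PiE_arb)
      moreover have "c q = undefined" using c False unfolding Hs_def by (rule PiE_arb)
      ultimately show ?thesis by (rule trans[OF _ sym])
    qed
  qed
qed

lemma KK_Hs: "KK \<subseteq> Hs" unfolding KK_def LW_def using phi_Hs by auto
lemma finite_KK: "finite KK" using finite_subset[OF KK_Hs finite_Hs] .
lemma one_KK: "phi [] \<in> KK" unfolding KK_def LW_def by auto
lemma mul_KK: "a \<in> KK \<Longrightarrow> b \<in> KK \<Longrightarrow> mul a b \<in> KK"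
  unfolding KK_def LW_def by (auto simp: phi_append[symmetric] intro!: imageI)
lemma phi_words_KK: "w \<in> words g n \<Longrightarrow> phi w \<in> KK"
  unfolding KK_def LW_def words_def by auto

lemma sum_mul_KK:
  assumes a: "a \<in> KK"
  shows "(\<Sum>k\<in>KK. f (mul a k)) = (\<Sum>k\<in>KK. f k)"
proof -
  have inj: "inj_on (mul a) KK" using mul_inj[of a] a KK_Hs inj_on_subset by blast
  have "mul a ` KK = KK" using endo_inj_surj[OF finite_KK _ inj] mul_KK a by blast
  then show ?thesis using sum.reindex[OF inj, of f] by simp
qed


lemma EE_cong: "(\<And>k. k \<in> KK \<Longrightarrow> F k = Gf k) \<Longrightarrow> EE n F = EE n Gf"
proof -
  assume h: "\<And>k. k \<in> KK \<Longrightarrow> F k = Gf k"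
  have "(\<Sum>w\<in>words g n. F (phi w)) = (\<Sum>w\<in>words g n. Gf (phi w))"
    by (rule sum.cong) (auto simp: h phi_words_KK)
  then show ?thesis unfolding EE_def by simp
qed

lemma EE_const: "EE n (\<lambda>_. c) = c"
  unfolding EE_def using BB_pos by (simp add: card_words)

lemma EE_mono: "(\<And>k. k \<in> KK \<Longrightarrow> F k \<le> Gf k) \<Longrightarrow> EE n F \<le> EE n Gf"
proof -
  assume h: "\<And>k. k \<in> KK \<Longrightarrow> F k \<le> Gf k"
  have "(\<Sum>w\<in>words g n. F (phi w)) \<le> (\<Sum>w\<in>words g n. Gf (phi w))"
    by (rule sum_mono) (auto simp: h phi_words_KK)
  then show ?thesis unfolding EE_def using BB_pos by (simp add: divide_right_mono)
qed

lemma EE_diff: "EE n (\<lambda>x. F x - Gf x) = EE n F - EE n Gf"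
  unfolding EE_def by (simp add: sum_subtractf diff_divide_distrib)

lemma EE_abs: "\<bar>EE n F\<bar> \<le> EE n (\<lambda>x. \<bar>F x\<bar>)"
proof -
  have "\<bar>\<Sum>w\<in>words g n. F (phi w)\<bar> \<le> (\<Sum>w\<in>words g n. \<bar>F (phi w)\<bar>)" by (rule sum_abs)
  moreover have p: "0 < real BB ^ n" using BB_pos by simp
  ultimately have "\<bar>\<Sum>w\<in>words g n. F (phi w)\<bar> / real BB ^ n \<le> (\<Sum>w\<in>words g n. \<bar>F (phi w)\<bar>) / real BB ^ n"
    by (intro divide_right_mono) auto
  moreover have "\<bar>EE n F\<bar> = \<bar>\<Sum>w\<in>words g n. F (phi w)\<bar> / real BB ^ n"
    unfolding EE_def abs_divide using p by simp
  ultimately show ?thesis unfolding EE_def by simp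
qed

lemma words_add: "words g (n + m) = (\<lambda>(u, v). u @ v) ` (words g n \<times> words g m)"
proof
  show "words g (n + m) \<subseteq> (\<lambda>(u, v). u @ v) ` (words g n \<times> words g m)"
  proof
    fix w assume w: "w \<in> words g (n + m)"
    have lw: "length w = n + m" using w unfolding words_def by simp
    have sw: "set w \<subseteq> letters g" using w unfolding words_def by simp
    have "set (take n w) \<subseteq> letters g" using set_take_subset[of n w] sw by (rule order.trans)
    moreover have "length (take n w) = n" using lw by simp
    ultimately have t: "take n w \<in> words g n" unfolding words_def by simp
    have "set (drop n w) \<subseteq> letters g" using set_drop_subset[of n w] sw by (rule order.trans)
    moreover have "length (drop n w) = m" using lw by simp
    ultimately have d: "drop n w \<in> words g m" unfolding words_def by simp
    have "(take n w, drop n w) \<in> words g n \<times> words g m" using t d by simp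
    then show "w \<in> (\<lambda>(u, v). u @ v) ` (words g n \<times> words g m)"
      by (rule rev_image_eqI) simp
  qed
  show "(\<lambda>(u, v). u @ v) ` (words g n \<times> words g m) \<subseteq> words g (n + m)"
  proof (rule image_subsetI)
    fix p assume p: "p \<in> words g n \<times> words g m"
    have "fst p \<in> words g n" "snd p \<in> words g m" using p by auto
    then have "fst p @ snd p \<in> words g (n + m)" unfolding words_def by simp
    then show "(\<lambda>(u, v). u @ v) p \<in> words g (n + m)" by (simp add: case_prod_beta)
  qed
qed

lemma words_add_inj: "inj_on (\<lambda>(u, v). u @ v) (words g n \<times> words g m)"
proof (rule inj_onI)
  fix p p' assume p: "p \<in> words g n \<times> words g m" and p': "p' \<in> words g n \<times> words g m"
    and e: "(\<lambda>(u, v). u @ v) p = (\<lambda>(u, v). u @ v) p'"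
  have l: "length (fst p) = length (fst p')" using p p' unfolding words_def by auto
  have e2: "fst p @ snd p = fst p' @ snd p'" using e by (simp add: case_prod_beta)
  have "fst p = fst p' \<and> snd p = snd p'" using append_eq_append_conv[of "fst p" "fst p'" "snd p" "snd p'"] l e2 by blast
  then show "p = p'" by (simp add: prod_eq_iff)
qed

lemma EE_split: "EE (n + m) F = EE n (\<lambda>a. EE m (\<lambda>b. F (mul a b)))"
proof -
  have "(\<Sum>w\<in>words g (n + m). F (phi w)) = (\<Sum>p\<in>words g n \<times> words g m. F (phi ((\<lambda>(u, v). u @ v) p)))"
    unfolding words_add using sum.reindex[OF words_add_inj, of "\<lambda>w. F (phi w)"] by simp
  also have "\<dots> = (\<Sum>p\<in>words g n \<times> words g m. F (mul (phi (fst p)) (phi (snd p))))"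
    by (rule sum.cong) (auto simp: phi_append words_def)
  also have "\<dots> = (\<Sum>u\<in>words g n. \<Sum>v\<in>words g m. F (mul (phi u) (phi v)))"
    by (simp add: sum.cartesian_product case_prod_beta)
  finally have e: "(\<Sum>w\<in>words g (n + m). F (phi w)) = (\<Sum>u\<in>words g n. \<Sum>v\<in>words g m. F (mul (phi u) (phi v)))" .
  show ?thesis unfolding EE_def e
    by (simp add: sum_divide_distrib power_add) (simp add: mult.commute)
qed

lemma witnesses: "\<exists>N w'. \<forall>k\<in>KK. w' k \<in> words g N \<and> phi (w' k) = k"
proof -
  have "\<forall>k\<in>KK. \<exists>w. set w \<subseteq> letters g \<and> phi w = k" unfolding KK_def LW_def by auto
  then have "\<exists>f. \<forall>k\<in>KK. set (f k) \<subseteq> letters g \<and> phi (f k) = k" by (rule bchoice)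
  then obtain f where f: "\<forall>k\<in>KK. set (f k) \<subseteq> letters g \<and> phi (f k) = k" by blast
  define N where "N = (\<Sum>k\<in>KK. length (f k))"
  define w' where "w' k = f k @ replicate (N - length (f k)) None" for k
  have "\<forall>k\<in>KK. w' k \<in> words g N \<and> phi (w' k) = k"
  proof
    fix k assume k: "k \<in> KK"
    have le: "length (f k) \<le> N" unfolding N_def using member_le_sum[OF k, of "\<lambda>k. length (f k)"] finite_KK by simp
    have "w' k \<in> words g N" unfolding w'_def words_def using f k le None_letters by auto
    moreover have "phi (w' k) = k" unfolding w'_def using f k phi_pad by auto
    ultimately show "w' k \<in> words g N \<and> phi (w' k) = k" ..
  qed
  then show ?thesis by blast
qed

lemma EE_convergent: "convergent (\<lambda>n. EE n F)"
proof -
  obtain N w' where W: "\<forall>k\<in>KK. w' k \<in> words g N \<and> phi (w' k) = k" using witnesses by blast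
  have W1: "w' k \<in> words g N" if "k \<in> KK" for k using W that by blast
  have W2: "phi (w' k) = k" if "k \<in> KK" for k using W that by blast
  have inj: "inj_on w' KK"
  proof (rule inj_onI)
    fix x y assume xy: "x \<in> KK" "y \<in> KK" "w' x = w' y"
    have "x = phi (w' x)" using W2[OF xy(1)] by simp
    also have "\<dots> = phi (w' y)" using xy(3) by simp
    also have "\<dots> = y" using W2[OF xy(2)] .
    finally show "x = y" .
  qed
  have img: "w' ` KK \<subseteq> words g N" using W1 by (rule image_subsetI)
  have Bp: "real BB ^ N > 0" using BB_pos by simp
  have cardK: "real (card KK) \<le> real BB ^ N"
  proof -
    have "card KK = card (w' ` KK)" using card_image[OF inj] by simp
    also have "\<dots> \<le> card (words g N)" by (rule card_mono[OF finite_words img])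
    finally show ?thesis by (simp add: card_words)
  qed
  have lower: "(\<Sum>k\<in>KK. Gf k) / real BB ^ N \<le> EE N Gf" if nn: "\<And>k. k \<in> KK \<Longrightarrow> 0 \<le> Gf k" for Gf
  proof -
    have "(\<Sum>k\<in>KK. Gf k) = (\<Sum>k\<in>KK. Gf (phi (w' k)))" by (rule sum.cong) (simp_all add: W2)
    also have "\<dots> = (\<Sum>w\<in>w' ` KK. Gf (phi w))" using sum.reindex[OF inj, of "\<lambda>w. Gf (phi w)"] by simp
    also have "\<dots> \<le> (\<Sum>w\<in>words g N. Gf (phi w))"
      by (rule sum_mono2[OF finite_words img]) (auto intro!: nn phi_words_KK)
    finally show ?thesis unfolding EE_def using Bp by (simp add: divide_right_mono)
  qed
  define gm where "gm m a = EE m (\<lambda>b. F (mul a b))" for m a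
  have step: "gm (n + m) a = EE n (\<lambda>b. gm m (mul a b))" if a: "a \<in> KK" for n m a
    unfolding gm_def EE_split
  proof (rule EE_cong)
    fix b assume b: "b \<in> KK"
    show "EE m (\<lambda>ba. F (mul a (mul b ba))) = EE m (\<lambda>ba. F (mul (mul a b) ba))"
    proof (rule EE_cong)
      fix c assume c: "c \<in> KK"
      have "mul a (mul b c) = mul (mul a b) c" using a b c KK_Hs by (intro mul_assoc) auto
      then show "F (mul a (mul b c)) = F (mul (mul a b) c)" by simp
    qed
  qed
  define Mx where "Mx m = Max (gm m ` KK)" for m
  define Mn where "Mn m = Min (gm m ` KK)" for m
  have ne: "KK \<noteq> {}" using one_KK by blast
  have bnd: "Mn m \<le> gm m a \<and> gm m a \<le> Mx m" if "a \<in> KK" for m a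
    unfolding Mx_def Mn_def using that finite_KK by auto
  have Mx_step: "Mx (n + m) \<le> Mx m" for n m
    unfolding Mx_def[of "n+m"]
  proof (rule Max.boundedI)
    show "finite (gm (n + m) ` KK)" using finite_KK by simp
    show "gm (n + m) ` KK \<noteq> {}" using ne by simp
    fix x assume "x \<in> gm (n + m) ` KK"
    then obtain a where a: "a \<in> KK" and x: "x = gm (n + m) a" by blast
    have "x = EE n (\<lambda>b. gm m (mul a b))" using step[OF a] x by simp
    also have "\<dots> \<le> EE n (\<lambda>_. Mx m)" by (rule EE_mono) (simp add: bnd[OF mul_KK[OF a]])
    finally show "x \<le> Mx m" by (simp add: EE_const)
  qed
  have Mn_step: "Mn m \<le> Mn (n + m)" for n m
    unfolding Mn_def[of "n+m"]
  proof (rule Min.boundedI)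
    show "finite (gm (n + m) ` KK)" using finite_KK by simp
    show "gm (n + m) ` KK \<noteq> {}" using ne by simp
    fix x assume "x \<in> gm (n + m) ` KK"
    then obtain a where a: "a \<in> KK" and x: "x = gm (n + m) a" by blast
    have "EE n (\<lambda>_. Mn m) \<le> EE n (\<lambda>b. gm m (mul a b))" by (rule EE_mono) (simp add: bnd[OF mul_KK[OF a]])
    also have "\<dots> = x" using step[OF a] x by simp
    finally show "Mn m \<le> x" by (simp add: EE_const)
  qed
  define D where "D m = Mx m - Mn m" for m
  have D_nn: "0 \<le> D m" for m unfolding D_def using bnd[OF one_KK, of m] by simp
  have D_dec: "D (n + m) \<le> D m" for n m unfolding D_def using Mx_step[of n m] Mn_step[of m n] by simp
  define c where "c = 1 - real (card KK) / real BB ^ N"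
  have c0: "0 \<le> c" unfolding c_def using cardK Bp by simp
  have c1: "c < 1" unfolding c_def using Bp ne finite_KK by (simp add: card_gt_0_iff)
  have contr: "D (N + m) \<le> c * D m" for m
  proof -
    define S where "S = (\<Sum>k\<in>KK. gm m k)"
    define cK where "cK = real (card KK)"
    have lo: "Mn m + (S - cK * Mn m) / real BB ^ N \<le> gm (N + m) a"
      and hi: "gm (N + m) a \<le> Mx m - (cK * Mx m - S) / real BB ^ N" if a: "a \<in> KK" for a
    proof -
      have s1: "(\<Sum>k\<in>KK. gm m (mul a k) - Mn m) = S - cK * Mn m"
        unfolding S_def cK_def using sum_mul_KK[OF a, of "\<lambda>k. gm m k"] by (simp add: sum_subtractf)
      have s2: "(\<Sum>k\<in>KK. Mx m - gm m (mul a k)) = cK * Mx m - S"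
        unfolding S_def cK_def using sum_mul_KK[OF a, of "\<lambda>k. gm m k"] by (simp add: sum_subtractf)
      have "(S - cK * Mn m) / real BB ^ N \<le> EE N (\<lambda>b. gm m (mul a b) - Mn m)"
        unfolding s1[symmetric] by (rule lower) (simp_all add: bnd[OF mul_KK[OF a]])
      also have "\<dots> = gm (N + m) a - Mn m" using step[OF a] by (simp add: EE_diff EE_const)
      finally show "Mn m + (S - cK * Mn m) / real BB ^ N \<le> gm (N + m) a" by simp
      have "(cK * Mx m - S) / real BB ^ N \<le> EE N (\<lambda>b. Mx m - gm m (mul a b))"
        unfolding s2[symmetric] by (rule lower) (simp_all add: bnd[OF mul_KK[OF a]])
      also have "\<dots> = Mx m - gm (N + m) a" using step[OF a] by (simp add: EE_diff EE_const)
      finally show "gm (N + m) a \<le> Mx m - (cK * Mx m - S) / real BB ^ N" by simp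
    qed
    have "Mx (N + m) \<le> Mx m - (cK * Mx m - S) / real BB ^ N"
      unfolding Mx_def[of "N+m"] using finite_KK ne hi by (auto intro!: Max.boundedI)
    moreover have "Mn m + (S - cK * Mn m) / real BB ^ N \<le> Mn (N + m)"
      unfolding Mn_def[of "N+m"] using finite_KK ne lo by (auto intro!: Min.boundedI)
    ultimately have "D (N + m) \<le> (Mx m - (cK * Mx m - S) / real BB ^ N) - (Mn m + (S - cK * Mn m) / real BB ^ N)"
      unfolding D_def by simp
    also have "\<dots> = c * D m" unfolding c_def D_def cK_def using Bp by (simp add: field_simps)
    finally show ?thesis .
  qed
  have Dk: "D (k * N) \<le> c ^ k * D 0" for k
  proof (induction k)
    case 0 then show ?case by simp
  next
    case (Suc k)
    have "D (Suc k * N) = D (N + k * N)" by simp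
    also have "\<dots> \<le> c * D (k * N)" by (rule contr)
    also have "\<dots> \<le> c * (c ^ k * D 0)" using Suc c0 by (simp add: mult_left_mono)
    finally show ?case by simp
  qed
  have Dlim: "D \<longlonglongrightarrow> 0"
  proof (rule LIMSEQ_I)
    fix r :: real assume r: "0 < r"
    have "(\<lambda>k. c ^ k * D 0) \<longlonglongrightarrow> 0 * D 0"
      by (intro tendsto_intros) (use c0 c1 in simp)
    then obtain k where k: "norm (c ^ k * D 0 - 0) < r" using LIMSEQ_D[OF _ r] by fastforce
    have "\<forall>n\<ge>k * N. norm (D n - 0) < r"
    proof (intro allI impI)
      fix n assume n: "k * N \<le> n"
      have "D n = D ((n - k * N) + k * N)" using n by simp
      also have "\<dots> \<le> D (k * N)" by (rule D_dec)
      also have "\<dots> \<le> c ^ k * D 0" by (rule Dk)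
      finally show "norm (D n - 0) < r" using k D_nn[of n] c0 D_nn[of 0] by simp
    qed
    then show "\<exists>no. \<forall>n\<ge>no. norm (D n - 0) < r" by blast
  qed
  have "decseq Mx" by (rule decseq_SucI) (use Mx_step[of 1] in simp)
  moreover have "\<forall>i. Mn 0 \<le> Mx i" using Mn_step[of 0] bnd[OF one_KK] by (metis add.right_neutral order.trans)
  ultimately obtain L where L: "Mx \<longlonglongrightarrow> L" using decseq_convergent by blast
  have Mn_eq: "Mn = (\<lambda>m. Mx m - D m)" unfolding D_def by auto
  have MnL: "Mn \<longlonglongrightarrow> L" unfolding Mn_eq using tendsto_diff[OF L Dlim] by simp
  have b1: "\<forall>m. Mn m \<le> gm m (phi [])" using bnd[OF one_KK] by blast
  have b2: "\<forall>m. gm m (phi []) \<le> Mx m" using bnd[OF one_KK] by blast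
  have "(\<lambda>m. gm m (phi [])) \<longlonglongrightarrow> L"
    by (rule tendsto_sandwich[OF always_eventually[OF b1] always_eventually[OF b2] MnL L])
  moreover have "gm m (phi []) = EE m F" for m
    unfolding gm_def
  proof (rule EE_cong)
    fix k assume "k \<in> KK"
    then have "k \<in> Hs" using KK_Hs by (rule subsetD[rotated])
    then show "F (mul (phi []) k) = F k" by (simp add: mul_one)
  qed
  ultimately have "(\<lambda>m. EE m F) \<longlonglongrightarrow> L" by simp
  then show ?thesis by (rule convergentI)
qed


lemma EE_conv_family:
  assumes lim: "\<And>h. (\<lambda>n. Fn n h) \<longlonglongrightarrow> L h"
  shows "convergent (\<lambda>n. EE n (Fn n))"
proof -
  obtain l where l: "(\<lambda>n. EE n L) \<longlonglongrightarrow> l" using EE_convergent[of L] unfolding convergent_def by blast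
  define bd where "bd n = (\<Sum>k\<in>KK. \<bar>Fn n k - L k\<bar>)" for n
  have bd0: "bd \<longlonglongrightarrow> 0"
  proof -
    have "(\<lambda>n. \<Sum>k\<in>KK. \<bar>Fn n k - L k\<bar>) \<longlonglongrightarrow> (\<Sum>k\<in>KK. \<bar>L k - L k\<bar>)"
      by (intro tendsto_sum tendsto_rabs tendsto_diff lim tendsto_const)
    then show ?thesis unfolding bd_def by simp
  qed
  have le: "norm (EE n (Fn n) - EE n L) \<le> bd n" for n
  proof -
    have "norm (EE n (Fn n) - EE n L) = \<bar>EE n (\<lambda>x. Fn n x - L x)\<bar>" by (simp add: EE_diff)
    also have "\<dots> \<le> EE n (\<lambda>x. \<bar>Fn n x - L x\<bar>)" by (rule EE_abs)
    also have "\<dots> \<le> EE n (\<lambda>_. bd n)"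
    proof (rule EE_mono)
      fix k assume k: "k \<in> KK"
      show "\<bar>Fn n k - L k\<bar> \<le> bd n" unfolding bd_def
        by (rule member_le_sum[OF k _ finite_KK]) simp
    qed
    also have "\<dots> = bd n" by (rule EE_const)
    finally show ?thesis .
  qed
  have "(\<lambda>n. EE n (Fn n) - EE n L) \<longlonglongrightarrow> 0"
    by (rule Lim_null_comparison[OF always_eventually bd0]) (use le in blast)
  then have "(\<lambda>n. (EE n (Fn n) - EE n L) + EE n L) \<longlonglongrightarrow> 0 + l" using l by (rule tendsto_add)
  then have "(\<lambda>n. EE n (Fn n)) \<longlonglongrightarrow> l" by simp
  then show ?thesis by (rule convergentI)
qed

definition "CC r P n = real (card {Rs \<in> presentations g r n. P (map phi Rs)}) / (real BB ^ n) ^ r"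

lemma pres_eq: "presentations g r n = {xs. set xs \<subseteq> words g n \<and> length xs = r}"
  unfolding presentations_def by (simp add: conj_commute)

lemma finite_pres: "finite (presentations g r n)"
  unfolding pres_eq by (rule finite_lists_length_eq[OF finite_words])

lemma pres_Suc_split:
  "{Rs \<in> presentations g (Suc r) n. P (map phi Rs)} =
   (\<lambda>(w, Rs). w # Rs) ` (SIGMA w:words g n. {Rs \<in> presentations g r n. P (phi w # map phi Rs)})"
proof
  show "{Rs \<in> presentations g (Suc r) n. P (map phi Rs)} \<subseteq>
   (\<lambda>(w, Rs). w # Rs) ` (SIGMA w:words g n. {Rs \<in> presentations g r n. P (phi w # map phi Rs)})"
  proof
    fix Rs assume Rs: "Rs \<in> {Rs \<in> presentations g (Suc r) n. P (map phi Rs)}"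
    then have len: "length Rs = Suc r" unfolding presentations_def by simp
    then obtain w Rs' where eq: "Rs = w # Rs'" by (cases Rs) simp_all
    have w: "w \<in> words g n" using Rs unfolding eq presentations_def by simp
    have Rs': "Rs' \<in> presentations g r n" using Rs unfolding eq presentations_def by simp
    have P: "P (phi w # map phi Rs')" using Rs unfolding eq by simp
    have "(w, Rs') \<in> (SIGMA w:words g n. {Rs \<in> presentations g r n. P (phi w # map phi Rs)})"
      using w Rs' P by simp
    then show "Rs \<in> (\<lambda>(w, Rs). w # Rs) ` (SIGMA w:words g n. {Rs \<in> presentations g r n. P (phi w # map phi Rs)})"
      by (rule rev_image_eqI) (simp add: eq)
  qed
  show "(\<lambda>(w, Rs). w # Rs) ` (SIGMA w:words g n. {Rs \<in> presentations g r n. P (phi w # map phi Rs)})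
    \<subseteq> {Rs \<in> presentations g (Suc r) n. P (map phi Rs)}"
  proof (rule image_subsetI)
    fix p assume p: "p \<in> (SIGMA w:words g n. {Rs \<in> presentations g r n. P (phi w # map phi Rs)})"
    have a: "fst p \<in> words g n" using p by auto
    have b: "snd p \<in> presentations g r n" "P (phi (fst p) # map phi (snd p))" using p by auto
    have "fst p # snd p \<in> {Rs \<in> presentations g (Suc r) n. P (map phi Rs)}"
      using a b unfolding presentations_def by simp
    then show "(\<lambda>(w, Rs). w # Rs) p \<in> {Rs \<in> presentations g (Suc r) n. P (map phi Rs)}"
      by (simp add: case_prod_beta)
  qed
qed

lemma cons_inj: "inj_on (\<lambda>(w, Rs). w # Rs) A"
proof (rule inj_onI)
  fix p q assume "(\<lambda>(w, Rs). w # Rs) p = (\<lambda>(w, Rs). w # Rs) q"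
  then have "fst p # snd p = fst q # snd q" by (simp add: case_prod_beta)
  then show "p = q" by (simp add: prod_eq_iff)
qed

lemma CC_Suc: "CC (Suc r) P n = EE n (\<lambda>h. CC r (\<lambda>hs. P (h # hs)) n)"
proof -
  define c where "c w = card {Rs \<in> presentations g r n. P (phi w # map phi Rs)}" for w
  have "card {Rs \<in> presentations g (Suc r) n. P (map phi Rs)}
     = card (SIGMA w:words g n. {Rs \<in> presentations g r n. P (phi w # map phi Rs)})"
    unfolding pres_Suc_split by (rule card_image[OF cons_inj])
  also have "\<dots> = (\<Sum>w\<in>words g n. c w)"
    unfolding c_def by (rule card_SigmaI[OF finite_words]) (simp add: finite_pres)
  finally have cs: "card {Rs \<in> presentations g (Suc r) n. P (map phi Rs)} = (\<Sum>w\<in>words g n. c w)" .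
  have "EE n (\<lambda>h. CC r (\<lambda>hs. P (h # hs)) n) = (\<Sum>w\<in>words g n. real (c w) / (real BB ^ n) ^ r) / real BB ^ n"
    unfolding EE_def CC_def c_def by simp
  also have "\<dots> = ((\<Sum>w\<in>words g n. real (c w)) / (real BB ^ n) ^ r) / real BB ^ n"
    by (simp add: sum_divide_distrib)
  also have "\<dots> = (\<Sum>w\<in>words g n. real (c w)) / (real BB ^ n) ^ Suc r"
    by (simp only: divide_divide_eq_left power_Suc2)
  also have "\<dots> = CC (Suc r) P n" unfolding CC_def cs by simp
  finally show ?thesis by simp
qed

lemma CC_zero: "CC 0 P n = (if P [] then 1 else 0)"
proof -
  have p0: "presentations g 0 n = {[]}" unfolding presentations_def by auto
  have "{Rs \<in> presentations g 0 n. P (map phi Rs)} = (if P [] then {[]} else {})"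
    unfolding p0 by auto
  then show ?thesis unfolding CC_def by simp
qed

lemma CC_convergent: "convergent (CC r P)"
proof (induction r arbitrary: P)
  case 0
  have "CC 0 P = (\<lambda>n. if P [] then 1 else 0)" by (rule ext) (rule CC_zero)
  then show ?case by (simp add: convergent_const)
next
  case (Suc r)
  have lim: "(\<lambda>n. CC r (\<lambda>hs. P (h # hs)) n) \<longlonglongrightarrow> lim (CC r (\<lambda>hs. P (h # hs)))" for h
    using Suc.IH[of "\<lambda>hs. P (h # hs)"] by (simp add: convergent_LIMSEQ_iff)
  have "convergent (\<lambda>n. EE n (\<lambda>h. CC r (\<lambda>hs. P (h # hs)) n))"
    by (rule EE_conv_family[OF lim])
  moreover have "CC (Suc r) P = (\<lambda>n. EE n (\<lambda>h. CC r (\<lambda>hs. P (h # hs)) n))"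
    by (rule ext) (rule CC_Suc)
  ultimately show ?case by simp
qed

lemma card_pres: "real (card (presentations g r n)) = (real BB ^ n) ^ r"
proof -
  have "card (presentations g r n) = card (words g n) ^ r"
    unfolding pres_eq by (rule card_lists_length_eq[OF finite_words])
  then show ?thesis by (simp add: card_words)
qed

definition "Ep hs = {q \<in> Xs. (\<forall>h\<in>set hs. h q = \<one>\<^bsub>G\<^esub>) \<and> generate G (q ` {..<g}) = carrier G}"

lemma epis_eq: "pres_epis G g Rs = Ep (map phi Rs)"
proof -
  have "pres_homs G g Rs = {q \<in> Xs. \<forall>h\<in>set (map phi Rs). h q = \<one>\<^bsub>G\<^esub>}"
  proof (rule Set.set_eqI)
    fix q
    show "q \<in> pres_homs G g Rs \<longleftrightarrow> q \<in> {q \<in> Xs. \<forall>h\<in>set (map phi Rs). h q = \<one>\<^bsub>G\<^esub>}"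
    proof (cases "q \<in> Xs")
      case True
      then have "\<And>R. phi R q = eval_word G q R" unfolding phi_def by simp
      then show ?thesis using True unfolding pres_homs_def Xs_def by simp
    next
      case False
      then show ?thesis unfolding pres_homs_def Xs_def by simp
    qed
  qed
  then show ?thesis unfolding pres_epis_def Ep_def by auto
qed

lemma prob_epi_eq: "prob_epi G g r n = CC r (\<lambda>hs. Ep hs \<noteq> {}) n"
  unfolding prob_epi_def CC_def card_pres epis_eq by simp

lemma prob_num_eq: "prob_num_epis G g r n k = CC r (\<lambda>hs. card (Ep hs // aut_equiv G g) = k) n"
  unfolding prob_num_epis_def CC_def card_pres num_epis_mod_aut_def epis_eq by simp

end

theorem proposition3p2:
  fixes Q :: "('a, 'b) monoid_scheme" and g r :: nat
  assumes "group Q" and "finite (carrier Q)" and "g \<ge> 1" and "r \<ge> 1"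
  shows "convergent (\<lambda>n. prob_epi Q g r n)
    \<and> (\<forall>k. convergent (\<lambda>n. prob_num_epis Q g r n k))"
proof -
  interpret rw Q g
    by (intro rw.intro rw_axioms.intro assms(1) assms(2))
  have "convergent (\<lambda>n. prob_epi Q g r n)"
    unfolding prob_epi_eq by (rule CC_convergent)
  moreover have "convergent (\<lambda>n. prob_num_epis Q g r n k)" for k
    unfolding prob_num_eq by (rule CC_convergent)
  ultimately show ?thesis by blast
qed

end
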